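(* Let $\epsilon>0$ be sufficiently small. Consider 4 players where players 3 and 4 have the uniform (Lebesgue) valuation on $[0,1]$; player 1 has a nonatomic valuation giving value $\frac12-\epsilon$ to $(0,\epsilon)$, $3\epsilon$ to $(\frac34,\frac34+3\epsilon)$, $\frac12-2\epsilon$ to $(1-\epsilon,1)$, and $0$ elsewhere; player 2 has a nonatomic valuation giving value $3\epsilon$ to $(\epsilon,2\epsilon)$, $\frac12-2\epsilon$ to $(\frac14-\epsilon,\frac14)$, $\frac12-\epsilon$ to $(\frac12,\frac12+\epsilon)$, and $0$ elsewhere. Then every envy-free complete connected division has egalitarian welfare at most $\frac14+2\epsilon$, while the partial division giving $(0,2\epsilon)$ to player 1, $(2\epsilon,\frac12)$ to player 3, $(\frac12,\frac12+\epsilon)$ to player 2, $(\frac12+\epsilon,1-\epsilon)$ to player 4 (discarding $(1-\epsilon,1)$) is envy-free with every player receiving utility at least $\frac12-2\epsilon$. Hence this instance exhibits an egalitarian $\alpha$-dumping paradox with $\alpha=\frac{2-8\epsilon}{1+8\epsilon}$.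
   Context: A (connected) division for players $1,\dots,n$ of the cake $[0,1]$ is a sequence $(X_1,\dots,X_n)$ of pairwise disjoint open intervals (possibly empty), $X_i$ being player $i$'s piece; it is complete if the union of the closures of the $X_i$ equals $[0,1]$, and partial otherwise. Each player $i$ has a valuation $v_i$, a nonatomic probability measure on $[0,1]$; $u_i(x,j)=v_i(X_j)$. A division is envy-free if $u_i(x,i)\ge u_i(x,j)$ for all $i,j$. Egalitarian welfare: $eg(x)=\min_i u_i(x,i)$. For $\alpha>1$, an instance exhibits an egalitarian $\alpha$-dumping paradox if there is an envy-free partial division $y$ with $eg(y)\ge\alpha\,eg(x)$ for every envy-free complete division $x$. *)

theory Defs
  imports "HOL-Probability.Probability"
begin

definition valuation :: "real measure \<Rightarrow> bool" where
  "valuation M \<longleftrightarrow> prob_space M \<and> space M = {0..1}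
     \<and> sets M = sets (restrict_space borel {0..1})
     \<and> (\<forall>x\<in>{0..1}. measure M {x} = 0)"

definition uniform01 :: "real measure" where
  "uniform01 = restrict_space lborel {0..1}"

definition division :: "nat \<Rightarrow> (nat \<Rightarrow> real set) \<Rightarrow> bool" where
  "division n X \<longleftrightarrow>
     (\<forall>i\<in>{1..n}. \<exists>a b. 0 \<le> a \<and> a \<le> b \<and> b \<le> 1 \<and> X i = {a<..<b})
   \<and> (\<forall>i\<in>{1..n}. \<forall>j\<in>{1..n}. i \<noteq> j \<longrightarrow> X i \<inter> X j = {})"

definition complete_div :: "nat \<Rightarrow> (nat \<Rightarrow> real set) \<Rightarrow> bool" where
  "complete_div n X \<longleftrightarrow> (\<Union>i\<in>{1..n}. closure (X i)) = {0..1}"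

definition util :: "(nat \<Rightarrow> real measure) \<Rightarrow> (nat \<Rightarrow> real set) \<Rightarrow> nat \<Rightarrow> nat \<Rightarrow> real" where
  "util v X i j = measure (v i) (X j)"

definition envy_free :: "(nat \<Rightarrow> real measure) \<Rightarrow> nat \<Rightarrow> (nat \<Rightarrow> real set) \<Rightarrow> bool" where
  "envy_free v n X \<longleftrightarrow> (\<forall>i\<in>{1..n}. \<forall>j\<in>{1..n}. util v X i i \<ge> util v X i j)"

definition eg :: "(nat \<Rightarrow> real measure) \<Rightarrow> nat \<Rightarrow> (nat \<Rightarrow> real set) \<Rightarrow> real" where
  "eg v n X = Min ((\<lambda>i. util v X i i) ` {1..n})"

definition eg_dumping_paradox :: "(nat \<Rightarrow> real measure) \<Rightarrow> nat \<Rightarrow> real \<Rightarrow> bool" where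
  "eg_dumping_paradox v n \<alpha> \<longleftrightarrow> \<alpha> > 1 \<and>
     (\<exists>y. division n y \<and> \<not> complete_div n y \<and> envy_free v n y \<and>
        (\<forall>x. division n x \<and> complete_div n x \<and> envy_free v n x \<longrightarrow> eg v n y \<ge> \<alpha> * eg v n x))"

end

theory Submission
  imports Defs
begin


lemma val_fin: "valuation M \<Longrightarrow> finite_measure M"
  unfolding valuation_def by (auto intro: prob_space.finite_measure)

lemma val_sets: "valuation M \<Longrightarrow> A \<subseteq> {0..1} \<Longrightarrow> A \<in> sets borel \<Longrightarrow> A \<in> sets M"
  unfolding valuation_def by (auto simp: sets_restrict_space_iff)

lemma val_Ioo: "valuation M \<Longrightarrow> 0 \<le> a \<Longrightarrow> b \<le> 1 \<Longrightarrow> {a<..<b} \<in> sets M"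
  by (rule val_sets) auto

lemma val_Z: "valuation M \<Longrightarrow> S \<in> sets borel \<Longrightarrow> {0..1} - S \<in> sets M"
  by (rule val_sets) auto

lemma val_le1: "valuation M \<Longrightarrow> measure M A \<le> 1"
  unfolding valuation_def by (auto intro: prob_space.prob_le_1)

lemma val_mono: "valuation M \<Longrightarrow> A \<subseteq> B \<Longrightarrow> B \<in> sets M \<Longrightarrow> measure M A \<le> measure M B"
  by (rule finite_measure.finite_measure_mono[OF val_fin])

lemma val_disj: "valuation M \<Longrightarrow> A \<in> sets M \<Longrightarrow> B \<in> sets M \<Longrightarrow> A \<inter> B = {}
   \<Longrightarrow> measure M A + measure M B \<le> 1"
  using finite_measure.finite_measure_Union[OF val_fin] val_le1 by metis

lemma val_sup: "valuation M \<Longrightarrow> A \<in> sets M \<Longrightarrow> B \<in> sets M \<Longrightarrow> A \<inter> B = {}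
   \<Longrightarrow> A \<union> B \<subseteq> C \<Longrightarrow> C \<in> sets M \<Longrightarrow> measure M A + measure M B \<le> measure M C"
  using finite_measure.finite_measure_Union[OF val_fin] val_mono by metis

lemma val_sub: "valuation M \<Longrightarrow> B \<in> sets M \<Longrightarrow> C \<in> sets M \<Longrightarrow> A \<subseteq> B \<union> C
   \<Longrightarrow> measure M A \<le> measure M B + measure M C"
  by (meson measure_Un_le order_trans sets.Un val_mono)

lemma unif_Ioo: "0 \<le> a \<Longrightarrow> a \<le> b \<Longrightarrow> b \<le> 1 \<Longrightarrow> measure uniform01 {a<..<b} = b - a"
  unfolding uniform01_def
  by (subst measure_restrict_space) auto

lemma sep: "(a::real) < b \<Longrightarrow> c < d \<Longrightarrow> {a<..<b} \<inter> {c<..<d} = {} \<Longrightarrow> b \<le> c \<or> d \<le> a"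
proof (rule ccontr)
  assume h: "a < b" "c < d" "{a<..<b} \<inter> {c<..<d} = {}" "\<not> (b \<le> c \<or> d \<le> a)"
  hence "(max a c + min b d)/2 \<in> {a<..<b} \<inter> {c<..<d}" by (auto simp: max_def min_def split: if_splits)
  with h show False by auto
qed

lemma clos: "x \<in> closure {a<..<(b::real)} \<Longrightarrow> a < b \<and> a \<le> x \<and> x \<le> b"
  by (cases "a < b") auto

lemma bound:
  fixes e :: real and v :: "nat \<Rightarrow> real measure" and X
  assumes e: "0<e" "e<1/100"
  and V1: "valuation (v 1)" and V2: "valuation (v 2)" and U3: "v 3 = uniform01" and U4: "v 4 = uniform01"
  and h11: "measure (v 1) {0<..<e} = 1/2 - e"
  and h12: "measure (v 1) {3/4<..<3/4 + 3*e} = 3*e"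
  and h13: "measure (v 1) {1-e<..<1} = 1/2 - 2*e"
  and h14: "measure (v 1) ({0..1} - ({0<..<e} \<union> {3/4<..<3/4 + 3*e} \<union> {1-e<..<1})) = 0"
  and h21: "measure (v 2) {e<..<2*e} = 3*e"
  and h22: "measure (v 2) {1/4-e<..<1/4} = 1/2 - 2*e"
  and h23: "measure (v 2) {1/2<..<1/2+e} = 1/2 - e"
  and h24: "measure (v 2) ({0..1} - ({e<..<2*e} \<union> {1/4-e<..<1/4} \<union> {1/2<..<1/2+e})) = 0"
  and D: "division 4 X" and C: "complete_div 4 X" and EF: "envy_free v 4 X"
  shows "eg v 4 X \<le> 1/4 + 2*e"
proof (rule ccontr)
  assume "\<not> ?thesis"
  hence egt: "eg v 4 X > 1/4 + 2*e" by simp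
  have egle: "eg v 4 X \<le> util v X i i" if "i \<in> {1..4}" for i
    unfolding eg_def by (rule Min_le) (use that in auto)
  have big: "measure (v i) (X i) > 1/4 + 2*e" if "i \<in> {1..4}" for i
    using egle[OF that] egt by (simp add: util_def)
  have ef: "measure (v i) (X j) \<le> measure (v i) (X i)" if "i \<in> {1..4}" "j \<in> {1..4}" for i j
    using EF that by (auto simp: envy_free_def util_def)
  have "\<forall>i\<in>{1..4::nat}. \<exists>a b. 0 \<le> a \<and> a \<le> b \<and> b \<le> 1 \<and> X i = {a<..<b}"
    using D by (simp add: division_def)
  then obtain a where "\<forall>i\<in>{1..4::nat}. \<exists>b. 0 \<le> a i \<and> a i \<le> b \<and> b \<le> 1 \<and> X i = {a i<..<b}"
    by (metis bchoice)
  then obtain b where ab: "\<forall>i\<in>{1..4::nat}. 0 \<le> a i \<and> a i \<le> b i \<and> b i \<le> 1 \<and> X i = {a i<..<b i}"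
    by (metis bchoice)
  have dj: "X i \<inter> X j = {}" if "i \<in> {1..4}" "j \<in> {1..4}" "i \<noteq> j" for i j
    using D that by (simp add: division_def)
  have I: "{1..4::nat} = {1,2,3,4}" by auto
  have ab1: "0 \<le> a 1" "a 1 \<le> b 1" "b 1 \<le> 1" "X 1 = {a 1<..<b 1}" using ab by auto
  have ab2: "0 \<le> a 2" "a 2 \<le> b 2" "b 2 \<le> 1" "X 2 = {a 2<..<b 2}" using ab by auto
  have ab3: "0 \<le> a 3" "a 3 \<le> b 3" "b 3 \<le> 1" "X 3 = {a 3<..<b 3}" using ab by auto
  have ab4: "0 \<le> a 4" "a 4 \<le> b 4" "b 4 \<le> 1" "X 4 = {a 4<..<b 4}" using ab by auto
  have L3: "b 3 - a 3 > 1/4 + 2*e" using big[of 3] ab3 U3 unif_Ioo by auto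
  have L4: "b 4 - a 4 > 1/4 + 2*e" using big[of 4] ab4 U4 unif_Ioo by auto
  have ne1: "a 1 < b 1"
  proof (rule ccontr)
    assume "\<not> a 1 < b 1" hence "X 1 = {}" using ab1 by auto
    thus False using big[of 1] e by simp
  qed
  have ne2: "a 2 < b 2"
  proof (rule ccontr)
    assume "\<not> a 2 < b 2" hence "X 2 = {}" using ab2 by auto
    thus False using big[of 2] e by simp
  qed
  have ne3: "a 3 < b 3" using L3 e by linarith
  have ne4: "a 4 < b 4" using L4 e by linarith
  have s12: "b 1 \<le> a 2 \<or> b 2 \<le> a 1" using sep[OF ne1 ne2] dj[of 1 2] ab1(4) ab2(4) by simp
  have s13: "b 1 \<le> a 3 \<or> b 3 \<le> a 1" using sep[OF ne1 ne3] dj[of 1 3] ab1(4) ab3(4) by simp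
  have s14: "b 1 \<le> a 4 \<or> b 4 \<le> a 1" using sep[OF ne1 ne4] dj[of 1 4] ab1(4) ab4(4) by simp
  have s23: "b 2 \<le> a 3 \<or> b 3 \<le> a 2" using sep[OF ne2 ne3] dj[of 2 3] ab2(4) ab3(4) by simp
  have s24: "b 2 \<le> a 4 \<or> b 4 \<le> a 2" using sep[OF ne2 ne4] dj[of 2 4] ab2(4) ab4(4) by simp
  have s34: "b 3 \<le> a 4 \<or> b 4 \<le> a 3" using sep[OF ne3 ne4] dj[of 3 4] ab3(4) ab4(4) by simp
  have Xs1: "X i \<in> sets (v 1)" if "i \<in> {1..4}" for i using ab that val_Ioo[OF V1] by auto
  have Xs2: "X i \<in> sets (v 2)" if "i \<in> {1..4}" for i using ab that val_Ioo[OF V2] by auto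
  define Z1 where "Z1 = {0..1} - ({0<..<e} \<union> {3/4<..<3/4 + 3*e} \<union> {1-e<..<1})"
  define Z2 where "Z2 = {0..1} - ({e<..<2*e} \<union> {1/4-e<..<1/4} \<union> {1/2<..<1/2+e})"
  have Z1s: "Z1 \<in> sets (v 1)" unfolding Z1_def by (rule val_Z[OF V1]) auto
  have Z2s: "Z2 \<in> sets (v 2)" unfolding Z2_def by (rule val_Z[OF V2]) auto
  have z1: "measure (v 1) Z1 = 0" using h14 Z1_def by simp
  have z2: "measure (v 2) Z2 = 0" using h24 Z2_def by simp
  \<comment> \<open>a piece long enough at the right end is too valuable for player 1\<close>
  have right34: False if k: "k \<in> {3,4}" and bk: "b k = 1" and ak: "a k < 3/4 - 2*e" and abk: "X k = {a k<..<b k}" for k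
  proof -
    have "measure (v 1) {3/4<..<3/4 + 3*e} + measure (v 1) {1-e<..<1} \<le> measure (v 1) (X k)"
    proof (rule val_sup[OF V1 val_Ioo[OF V1] val_Ioo[OF V1]])
      show "{3/4<..<3/4 + 3*e} \<inter> {1-e<..<1} = {}" using e by auto
      show "{3/4<..<3/4 + 3*e} \<union> {1-e<..<1} \<subseteq> X k" unfolding abk bk using ak e by auto
      show "X k \<in> sets (v 1)" using Xs1[of k] k by auto
    qed (use e in auto)
    hence "measure (v 1) (X k) \<ge> 1/2 + e" using h12 h13 by simp
    moreover have "measure (v 1) (X k) \<le> measure (v 1) (X 1)" using ef[of 1 k] k by auto
    moreover have "measure (v 1) (X 1) + measure (v 1) (X k) \<le> 1"
      using val_disj[OF V1 Xs1[of 1] Xs1[of k]] dj[of 1 k] k by auto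
    ultimately show False using e by simp
  qed
  have left34: False if k: "k \<in> {3,4}" and ak0: "a k = 0" and bk: "b k > 1/4 + 2*e" and abk: "X k = {a k<..<b k}" for k
  proof -
    have "measure (v 2) {e<..<2*e} + measure (v 2) {1/4-e<..<1/4} \<le> measure (v 2) (X k)"
    proof (rule val_sup[OF V2 val_Ioo[OF V2] val_Ioo[OF V2]])
      show "{e<..<2*e} \<inter> {1/4-e<..<1/4} = {}" using e by auto
      show "{e<..<2*e} \<union> {1/4-e<..<1/4} \<subseteq> X k" unfolding abk ak0 using bk e by auto
      show "X k \<in> sets (v 2)" using Xs2[of k] k by auto
    qed (use e in auto)
    hence "measure (v 2) (X k) \<ge> 1/2 + e" using h21 h22 by simp
    moreover have "measure (v 2) (X k) \<le> measure (v 2) (X 2)" using ef[of 2 k] k by auto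
    moreover have "measure (v 2) (X 2) + measure (v 2) (X k) \<le> 1"
      using val_disj[OF V2 Xs2[of 2] Xs2[of k]] dj[of 2 k] k by auto
    ultimately show False using e by simp
  qed
  have "1 \<in> (\<Union>i\<in>{1..4}. closure (X i))" using C by (simp add: complete_div_def)
  then obtain i where i: "i \<in> {1..4}" "1 \<in> closure (X i)" by auto
  have "0 \<in> (\<Union>i\<in>{1..4}. closure (X i))" using C by (simp add: complete_div_def)
  then obtain j where j: "j \<in> {1..4}" "0 \<in> closure (X j)" by auto
  have abi: "0 \<le> a i \<and> a i \<le> b i \<and> b i \<le> 1 \<and> X i = {a i<..<b i}" using ab i(1) by blast
  have abj: "0 \<le> a j \<and> a j \<le> b j \<and> b j \<le> 1 \<and> X j = {a j<..<b j}" using ab j(1) by blast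
  have bi: "b i = 1" using clos[of 1 "a i" "b i"] i(2) abi by simp
  have aj: "a j = 0" using clos[of 0 "a j" "b j"] j(2) abj by simp
  have "i = 1"
  proof -
    have "i \<noteq> 3" using right34[of 3] bi L3 ab3(4) e by force
    moreover have "i \<noteq> 4" using right34[of 4] bi L4 ab4(4) e by force
    moreover have "i \<noteq> 2"
    proof
      assume i2: "i = 2"
      have o32: "b 3 \<le> a 2" using s23 bi[unfolded i2] ab3(3) ne3 by (elim disjE) linarith+
      have o42: "b 4 \<le> a 2" using s24 bi[unfolded i2] ab4(3) ne4 by (elim disjE) linarith+
      have "a 2 \<ge> 1/2 + 4*e" using s34 o32 o42 L3 L4 ab3(1) ab4(1) by (elim disjE) linarith+
      hence "X 2 \<subseteq> Z2" using ab2 e unfolding Z2_def by auto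
      hence "measure (v 2) (X 2) \<le> 0" using val_mono[OF V2 _ Z2s] z2 by auto
      thus False using big[of 2] e by auto
    qed
    ultimately show ?thesis using i I by auto
  qed
  hence b1: "b 1 = 1" using bi by simp
  have "j = 2"
  proof -
    have "j \<noteq> 1" using aj b1 s13 ab3(1-3) L3 e by force
    moreover have "j \<noteq> 3" using left34[of 3] aj L3 ab3(1,4) e by force
    moreover have "j \<noteq> 4" using left34[of 4] aj L4 ab4(1,4) e by force
    ultimately show ?thesis using j I by auto
  qed
  hence a2: "a 2 = 0" using aj by simp
  have o23: "b 2 \<le> a 3" using s23 a2 ab3(1) ne3 by (elim disjE) linarith+
  have o24: "b 2 \<le> a 4" using s24 a2 ab4(1) ne4 by (elim disjE) linarith+
  have o31: "b 3 \<le> a 1" using s13 b1 ab3(3) ne3 by (elim disjE) linarith+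
  have o41: "b 4 \<le> a 1" using s14 b1 ab4(3) ne4 by (elim disjE) linarith+
  have gap: "a 1 - b 2 > 1/2 + 4*e" using s34 o23 o24 o31 o41 L3 L4 by (elim disjE) linarith+
  have b2: "b 2 > 1/4 - e"
  proof (rule ccontr)
    assume "\<not> ?thesis"
    hence b2': "b 2 \<le> 1/4 - e" by simp
    have "X 2 \<subseteq> {e<..<2*e} \<union> Z2"
    proof
      fix x assume "x \<in> X 2"
      hence x: "0 < x" "x < b 2" using ab2(4) a2 by auto
      show "x \<in> {e<..<2*e} \<union> Z2"
      proof (cases "e < x \<and> x < 2*e")
        case True thus ?thesis by simp
      next
        case False
        have "x \<in> Z2" unfolding Z2_def using False x b2' e ab2(3) by simp
        thus ?thesis by simp
      qed
    qed
    hence "measure (v 2) (X 2) \<le> measure (v 2) {e<..<2*e} + measure (v 2) Z2"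
      using val_sub[OF V2 val_Ioo[OF V2] Z2s, of e "2*e" "X 2"] e by auto
    thus False using big[of 2] h21 z2 e by auto
  qed
  have "X 1 \<subseteq> {1-e<..<1} \<union> Z1"
  proof
    fix x assume "x \<in> X 1"
    hence x: "a 1 < x" "x < 1" using ab1(4) b1 by auto
    have x2: "x > 3/4 + 3*e" using x gap b2 ab2(1) by linarith
    show "x \<in> {1-e<..<1} \<union> Z1"
    proof (cases "1 - e < x")
      case True thus ?thesis using x by simp
    next
      case False
      have "x \<in> Z1" unfolding Z1_def using False x x2 e ab1(1) by simp
      thus ?thesis by simp
    qed
  qed
  hence "measure (v 1) (X 1) \<le> measure (v 1) {1-e<..<1} + measure (v 1) Z1"
    by (intro val_sub[OF V1 val_Ioo[OF V1] Z1s]) (use e in linarith)+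
  hence m1: "measure (v 1) (X 1) \<le> 1/2 - 2*e" using h13 z1 by linarith
  have "measure (v 1) {0<..<e} \<le> measure (v 1) (X 2)"
  proof (rule val_mono[OF V1 _ Xs1[of 2]])
    show "{0<..<e} \<subseteq> X 2" unfolding ab2(4) a2 using b2 e by auto
  qed simp
  hence "measure (v 1) (X 2) \<ge> 1/2 - e" using h11 by simp
  moreover have "measure (v 1) (X 2) \<le> measure (v 1) (X 1)" by (rule ef) auto
  ultimately show False using m1 e by linarith
qed

lemma disj_Ioo: "(b::real) \<le> c \<Longrightarrow> {a<..<b} \<inter> {c<..<d} = {}"
  by auto

lemma Ypart:
  fixes e :: real and v :: "nat \<Rightarrow> real measure" and Y
  assumes e: "0<e" "e<1/100"
  and V1: "valuation (v 1)" and V2: "valuation (v 2)" and U3: "v 3 = uniform01" and U4: "v 4 = uniform01"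
  and h11: "measure (v 1) {0<..<e} = 1/2 - e"
  and h12: "measure (v 1) {3/4<..<3/4 + 3*e} = 3*e"
  and h14: "measure (v 1) ({0..1} - ({0<..<e} \<union> {3/4<..<3/4 + 3*e} \<union> {1-e<..<1})) = 0"
  and h21: "measure (v 2) {e<..<2*e} = 3*e"
  and h22: "measure (v 2) {1/4-e<..<1/4} = 1/2 - 2*e"
  and h23: "measure (v 2) {1/2<..<1/2+e} = 1/2 - e"
  and h24: "measure (v 2) ({0..1} - ({e<..<2*e} \<union> {1/4-e<..<1/4} \<union> {1/2<..<1/2+e})) = 0"
  and Y: "Y = (\<lambda>i::nat. if i = 1 then {0<..<2*e}
                        else if i = 2 then {1/2<..<1/2+e}
                        else if i = 3 then {2*e<..<1/2}
                        else if i = 4 then {1/2+e<..<1-e} else {})"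
  shows "division 4 Y \<and> \<not> complete_div 4 Y \<and> envy_free v 4 Y
           \<and> (\<forall>i\<in>{1..4}. util v Y i i \<ge> 1/2 - 2*e)"
proof -
  have Y1: "Y 1 = {0<..<2*e}" and Y2: "Y 2 = {1/2<..<1/2+e}" and Y3: "Y 3 = {2*e<..<1/2}"
    and Y4: "Y 4 = {1/2+e<..<1-e}" using Y by auto
  have I: "{1..4::nat} = {1,2,3,4}" by auto
  define Z1 where "Z1 = {0..1} - ({0<..<e} \<union> {3/4<..<3/4 + 3*e} \<union> {1-e<..<1})"
  define Z2 where "Z2 = {0..1} - ({e<..<2*e} \<union> {1/4-e<..<1/4} \<union> {1/2<..<1/2+e})"
  have Z1s: "Z1 \<in> sets (v 1)" unfolding Z1_def by (rule val_Z[OF V1]) auto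
  have Z2s: "Z2 \<in> sets (v 2)" unfolding Z2_def by (rule val_Z[OF V2]) auto
  have z1: "measure (v 1) Z1 = 0" using h14 Z1_def by simp
  have z2: "measure (v 2) Z2 = 0" using h24 Z2_def by simp
  have div: "division 4 Y"
    unfolding division_def
  proof (intro conjI ballI impI)
    fix i :: nat assume "i \<in> {1..4}"
    hence "i = 1 \<or> i = 2 \<or> i = 3 \<or> i = 4" by auto
    thus "\<exists>a b. 0 \<le> a \<and> a \<le> b \<and> b \<le> 1 \<and> Y i = {a<..<b}"
    proof (elim disjE)
      assume "i = 1" thus ?thesis using Y1 e by (intro exI[of _ 0] exI[of _ "2*e"]) auto
    next
      assume "i = 2" thus ?thesis using Y2 e by (intro exI[of _ "1/2"] exI[of _ "1/2+e"]) auto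
    next
      assume "i = 3" thus ?thesis using Y3 e by (intro exI[of _ "2*e"] exI[of _ "1/2"]) auto
    next
      assume "i = 4" thus ?thesis using Y4 e by (intro exI[of _ "1/2+e"] exI[of _ "1-e"]) auto
    qed
  next
    fix i j :: nat assume "i \<in> {1..4}" "j \<in> {1..4}" "i \<noteq> j"
    have d12: "Y 1 \<inter> Y 2 = {}" unfolding Y1 Y2 by (rule disj_Ioo) (use e in linarith)
    have d13: "Y 1 \<inter> Y 3 = {}" unfolding Y1 Y3 by (rule disj_Ioo) (use e in linarith)
    have d14: "Y 1 \<inter> Y 4 = {}" unfolding Y1 Y4 by (rule disj_Ioo) (use e in linarith)
    have d23: "Y 3 \<inter> Y 2 = {}" unfolding Y3 Y2 by (rule disj_Ioo) (use e in linarith)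
    have d24: "Y 2 \<inter> Y 4 = {}" unfolding Y2 Y4 by (rule disj_Ioo) (use e in linarith)
    have d34: "Y 3 \<inter> Y 4 = {}" unfolding Y3 Y4 by (rule disj_Ioo) (use e in linarith)
    have ij: "i = 1 \<or> i = 2 \<or> i = 3 \<or> i = 4" "j = 1 \<or> j = 2 \<or> j = 3 \<or> j = 4"
      using \<open>i \<in> {1..4}\<close> \<open>j \<in> {1..4}\<close> by auto
    show "Y i \<inter> Y j = {}"
      using ij \<open>i \<noteq> j\<close> d12 d13 d14 d23 d24 d34 by (elim disjE) (simp_all add: Int_commute)
  qed
  have nc: "\<not> complete_div 4 Y"
  proof
    assume "complete_div 4 Y"
    hence "1 - e/2 \<in> (\<Union>i\<in>{1..4}. closure (Y i))" using e by (auto simp: complete_div_def)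
    then obtain i where i: "i \<in> {1,2,3,4}" "1 - e/2 \<in> closure (Y i)" using I by auto
    from i(1) have "i = 1 \<or> i = 2 \<or> i = 3 \<or> i = 4" by simp
    thus False
    proof (elim disjE)
      assume "i = 1" thus False using clos[of "1 - e/2" 0 "2*e"] i(2) Y1 e by simp
    next
      assume "i = 2" thus False using clos[of "1 - e/2" "1/2" "1/2+e"] i(2) Y2 e by simp
    next
      assume "i = 3" thus False using clos[of "1 - e/2" "2*e" "1/2"] i(2) Y3 e by simp
    next
      assume "i = 4" thus False using clos[of "1 - e/2" "1/2+e" "1-e"] i(2) Y4 e by simp
    qed
  qed
  have m11: "measure (v 1) (Y 1) \<ge> 1/2 - e"
  proof -
    have "measure (v 1) {0<..<e} \<le> measure (v 1) (Y 1)"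
      unfolding Y1 by (rule val_mono[OF V1 _ val_Ioo[OF V1]]) (use e in auto)
    thus ?thesis using h11 by simp
  qed
  have m12: "measure (v 1) (Y 2) \<le> 0"
  proof -
    have "Y 2 \<subseteq> Z1" unfolding Y2 Z1_def using e by auto
    thus ?thesis using val_mono[OF V1 _ Z1s] z1 by auto
  qed
  have m13: "measure (v 1) (Y 3) \<le> 0"
  proof -
    have "Y 3 \<subseteq> Z1" unfolding Y3 Z1_def using e by auto
    thus ?thesis using val_mono[OF V1 _ Z1s] z1 by auto
  qed
  have m14: "measure (v 1) (Y 4) \<le> 3*e"
  proof -
    have "Y 4 \<subseteq> {3/4<..<3/4 + 3*e} \<union> Z1"
    proof
      fix x assume "x \<in> Y 4"
      hence x: "1/2+e < x" "x < 1-e" unfolding Y4 by auto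
      show "x \<in> {3/4<..<3/4 + 3*e} \<union> Z1"
      proof (cases "3/4 < x \<and> x < 3/4 + 3*e")
        case True thus ?thesis by simp
      next
        case False
        have "x \<in> Z1" unfolding Z1_def using False x e by simp
        thus ?thesis by simp
      qed
    qed
    hence "measure (v 1) (Y 4) \<le> measure (v 1) {3/4<..<3/4 + 3*e} + measure (v 1) Z1"
      by (intro val_sub[OF V1 val_Ioo[OF V1] Z1s]) (use e in linarith)+
    thus ?thesis using h12 z1 by linarith
  qed
  have m22: "measure (v 2) (Y 2) = 1/2 - e" using h23 Y2 by simp
  have m21: "measure (v 2) (Y 1) \<le> 3*e"
  proof -
    have "Y 1 \<subseteq> {e<..<2*e} \<union> Z2"
    proof
      fix x assume "x \<in> Y 1"
      hence x: "0 < x" "x < 2*e" unfolding Y1 by auto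
      show "x \<in> {e<..<2*e} \<union> Z2"
      proof (cases "e < x")
        case True thus ?thesis using x by simp
      next
        case False
        have "x \<in> Z2" unfolding Z2_def using False x e by simp
        thus ?thesis by simp
      qed
    qed
    hence "measure (v 2) (Y 1) \<le> measure (v 2) {e<..<2*e} + measure (v 2) Z2"
      by (intro val_sub[OF V2 val_Ioo[OF V2] Z2s]) (use e in linarith)+
    thus ?thesis using h21 z2 by linarith
  qed
  have m23: "measure (v 2) (Y 3) \<le> 1/2 - 2*e"
  proof -
    have "Y 3 \<subseteq> {1/4-e<..<1/4} \<union> Z2"
    proof
      fix x assume "x \<in> Y 3"
      hence x: "2*e < x" "x < 1/2" unfolding Y3 by auto
      show "x \<in> {1/4-e<..<1/4} \<union> Z2"
      proof (cases "1/4-e < x \<and> x < 1/4")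
        case True thus ?thesis by simp
      next
        case False
        have "x \<in> Z2" unfolding Z2_def using False x e by simp
        thus ?thesis by simp
      qed
    qed
    hence "measure (v 2) (Y 3) \<le> measure (v 2) {1/4-e<..<1/4} + measure (v 2) Z2"
      by (intro val_sub[OF V2 val_Ioo[OF V2] Z2s]) (use e in linarith)+
    thus ?thesis using h22 z2 by linarith
  qed
  have m24: "measure (v 2) (Y 4) \<le> 0"
  proof -
    have "Y 4 \<subseteq> Z2" unfolding Y4 Z2_def using e by auto
    thus ?thesis using val_mono[OF V2 _ Z2s] z2 by auto
  qed
  have u1: "measure uniform01 (Y 1) = 2*e" unfolding Y1 using e by (subst unif_Ioo) auto
  have u2: "measure uniform01 (Y 2) = e" unfolding Y2 using e by (subst unif_Ioo) auto
  have u3: "measure uniform01 (Y 3) = 1/2 - 2*e" unfolding Y3 using e by (subst unif_Ioo) auto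
  have u4: "measure uniform01 (Y 4) = 1/2 - 2*e" unfolding Y4 using e by (subst unif_Ioo) auto
  have ef: "envy_free v 4 Y"
    unfolding envy_free_def util_def I
    using m11 m12 m13 m14 m21 m22 m23 m24 u1 u2 u3 u4 U3 U4 e by auto
  have ut: "\<forall>i\<in>{1..4}. util v Y i i \<ge> 1/2 - 2*e"
    unfolding util_def I using m11 m22 u3 u4 U3 U4 e by auto
  show ?thesis using div nc ef ut by blast
qed

lemma paradox_part:
  fixes e :: real and v :: "nat \<Rightarrow> real measure"
  assumes e: "0<e" "e<1/100"
  and V1: "valuation (v 1)" and V2: "valuation (v 2)" and U3: "v 3 = uniform01" and U4: "v 4 = uniform01"
  and h11: "measure (v 1) {0<..<e} = 1/2 - e"
  and h12: "measure (v 1) {3/4<..<3/4 + 3*e} = 3*e"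
  and h13: "measure (v 1) {1-e<..<1} = 1/2 - 2*e"
  and h14: "measure (v 1) ({0..1} - ({0<..<e} \<union> {3/4<..<3/4 + 3*e} \<union> {1-e<..<1})) = 0"
  and h21: "measure (v 2) {e<..<2*e} = 3*e"
  and h22: "measure (v 2) {1/4-e<..<1/4} = 1/2 - 2*e"
  and h23: "measure (v 2) {1/2<..<1/2+e} = 1/2 - e"
  and h24: "measure (v 2) ({0..1} - ({e<..<2*e} \<union> {1/4-e<..<1/4} \<union> {1/2<..<1/2+e})) = 0"
  shows "eg_dumping_paradox v 4 ((2 - 8*e) / (1 + 8*e))"
proof -
  define Y where "Y = (\<lambda>i::nat. if i = 1 then {0<..<2*e}
                        else if i = 2 then {1/2<..<1/2+e}
                        else if i = 3 then {2*e<..<1/2}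
                        else if i = 4 then {1/2+e<..<1-e} else {})"
  have YP: "division 4 Y \<and> \<not> complete_div 4 Y \<and> envy_free v 4 Y
           \<and> (\<forall>i\<in>{1..4}. util v Y i i \<ge> 1/2 - 2*e)"
    by (rule Ypart[OF e V1 V2 U3 U4 h11 h12 h14 h21 h22 h23 h24 Y_def])
  have egY: "eg v 4 Y \<ge> 1/2 - 2*e"
    unfolding eg_def using YP by (subst Min_ge_iff) auto
  define \<alpha> where "\<alpha> = (2 - 8*e) / (1 + 8*e)"
  have a1: "\<alpha> > 1" unfolding \<alpha>_def using e by (simp add: field_simps)
  have a2: "\<alpha> * (1/4 + 2*e) = 1/2 - 2*e" unfolding \<alpha>_def using e by (simp add: field_simps)
  have "\<forall>x. division 4 x \<and> complete_div 4 x \<and> envy_free v 4 x \<longrightarrow> eg v 4 Y \<ge> \<alpha> * eg v 4 x"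
  proof (intro allI impI)
    fix x assume x: "division 4 x \<and> complete_div 4 x \<and> envy_free v 4 x"
    have "eg v 4 x \<le> 1/4 + 2*e"
      using x by (intro bound[OF e V1 V2 U3 U4 h11 h12 h13 h14 h21 h22 h23 h24]) auto
    hence "\<alpha> * eg v 4 x \<le> \<alpha> * (1/4 + 2*e)" using a1 by (intro mult_left_mono) auto
    thus "eg v 4 Y \<ge> \<alpha> * eg v 4 x" using a2 egY by linarith
  qed
  thus ?thesis unfolding eg_dumping_paradox_def \<alpha>_def[symmetric] using a1 YP by blast
qed


theorem mainTheorem10:
  shows "\<exists>\<epsilon>0>0. \<forall>\<epsilon>::real. 0 < \<epsilon> \<and> \<epsilon> < \<epsilon>0 \<longrightarrow>
    (\<forall>v :: nat \<Rightarrow> real measure.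
       valuation (v 1) \<and> valuation (v 2) \<and> v 3 = uniform01 \<and> v 4 = uniform01
     \<and> measure (v 1) {0<..<\<epsilon>} = 1/2 - \<epsilon>
     \<and> measure (v 1) {3/4<..<3/4 + 3*\<epsilon>} = 3*\<epsilon>
     \<and> measure (v 1) {1-\<epsilon><..<1} = 1/2 - 2*\<epsilon>
     \<and> measure (v 1) ({0..1} - ({0<..<\<epsilon>} \<union> {3/4<..<3/4 + 3*\<epsilon>} \<union> {1-\<epsilon><..<1})) = 0
     \<and> measure (v 2) {\<epsilon><..<2*\<epsilon>} = 3*\<epsilon>
     \<and> measure (v 2) {1/4-\<epsilon><..<1/4} = 1/2 - 2*\<epsilon>
     \<and> measure (v 2) {1/2<..<1/2+\<epsilon>} = 1/2 - \<epsilon>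
     \<and> measure (v 2) ({0..1} - ({\<epsilon><..<2*\<epsilon>} \<union> {1/4-\<epsilon><..<1/4} \<union> {1/2<..<1/2+\<epsilon>})) = 0
     \<longrightarrow>
       (\<forall>X. division 4 X \<and> complete_div 4 X \<and> envy_free v 4 X \<longrightarrow> eg v 4 X \<le> 1/4 + 2*\<epsilon>)
     \<and> (let Y = (\<lambda>i::nat. if i = 1 then {0<..<2*\<epsilon>}
                        else if i = 2 then {1/2<..<1/2+\<epsilon>}
                        else if i = 3 then {2*\<epsilon><..<1/2}
                        else if i = 4 then {1/2+\<epsilon><..<1-\<epsilon>} else {})
        in division 4 Y \<and> \<not> complete_div 4 Y \<and> envy_free v 4 Y
           \<and> (\<forall>i\<in>{1..4}. util v Y i i \<ge> 1/2 - 2*\<epsilon>))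
     \<and> eg_dumping_paradox v 4 ((2 - 8*\<epsilon>) / (1 + 8*\<epsilon>)))"
    apply (rule exI[of _ "1/100"])
  apply (intro conjI allI impI)
  subgoal by simp
  subgoal for e v X
    by (elim conjE, rule bound[of e v X]; assumption)
  subgoal for e v
    unfolding Let_def by (elim conjE, rule Ypart[of e v]; (assumption | rule refl))
  subgoal for e v
    by (elim conjE, rule paradox_part[of e v]; assumption)
  done

end
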